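(* Let $(u_1,\ldots,u_k)$ be the Frenet $k$-frame of a sequence $\{x_i\}$ in $\mathbb R^n$ converging to $x$. Suppose a simplex $T\subseteq\mathbb R^n$ contains every $x_i$. Then there exist $\lambda_1,\ldots,\lambda_k>0$ such that $T$ contains the simplex $\operatorname{conv}(x,x+\lambda_1u_1,\ldots,x+\lambda_1u_1+\cdots+\lambda_ku_k)$.
   Context: For $y\in\mathbb R^n$ and a linear subspace $L$, $\mathsf{proj}_L(y)$ is the orthogonal projection of $y$ onto $L$. Frenet frame of a sequence: let $\sigma=\{x_i\}$ converge to $x$ and let $(u_1,\ldots,u_k)$ be pairwise orthogonal unit vectors. $u_1$ is the Frenet $1$-frame of $\sigma$ if $x_i\ne x$ for all $i$ and $u_1=\lim_{i}(x_i-x)/\|x_i-x\|$. $(u_1,\ldots,u_k)$ is the Frenet $k$-frame of $\sigma$ if $(u_1,\ldots,u_{k-1})$ is its Frenet $(k-1)$-frame and $u_k=\lim_{i}\frac{x_i-x-\mathsf{proj}_{\mathbb Ru_1+\cdots+\mathbb Ru_{k-1}}(x_i-x)}{\|x_i-x-\mathsf{proj}_{\mathbb Ru_1+\cdots+\mathbb Ru_{k-1}}(x_i-x)\|}$, with all denominators nonzero. *)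

theory Defs
  imports "HOL-Analysis.Analysis"
begin

definition proj_sub :: "'a::euclidean_space set \<Rightarrow> 'a \<Rightarrow> 'a" where
  "proj_sub L y = (SOME p. p \<in> L \<and> (\<forall>v\<in>L. inner (y - p) v = 0))"

definition frenet_frame ::
  "(nat \<Rightarrow> 'a::euclidean_space) \<Rightarrow> 'a \<Rightarrow> nat \<Rightarrow> (nat \<Rightarrow> 'a) \<Rightarrow> bool" where
  "frenet_frame xs x k u \<longleftrightarrow>
     xs \<longlonglongrightarrow> x \<and>
     (\<forall>j\<in>{1..k}. norm (u j) = 1) \<and>
     (\<forall>i\<in>{1..k}. \<forall>j\<in>{1..k}. i \<noteq> j \<longrightarrow> inner (u i) (u j) = 0) \<and>
     (\<forall>j\<in>{1..k}.
        let r = (\<lambda>m. xs m - x - proj_sub (span (u ` {1..<j})) (xs m - x))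
        in (\<forall>m. r m \<noteq> 0) \<and> ((\<lambda>m. r m /\<^sub>R norm (r m)) \<longlonglongrightarrow> u j))"

end

theory Submission
  imports Defs
begin

lemma proj_in:
  fixes y :: "'a::euclidean_space"
  shows "proj_sub (span S) y \<in> span S"
proof -
  obtain p z where p: "p \<in> span S" "\<And>w. w \<in> span S \<Longrightarrow> orthogonal z w" "y = p + z"
    using orthogonal_subspace_decomp_exists by metis
  have "\<exists>p. p \<in> span S \<and> (\<forall>v\<in>span S. inner (y - p) v = 0)"
    using p by (intro exI[of _ p]) (auto simp: orthogonal_def)
  from someI_ex[OF this] show ?thesis unfolding proj_sub_def by blast
qed

lemma sign_lemma:
  fixes xs :: "nat \<Rightarrow> 'a::euclidean_space"
  assumes fr: "frenet_frame xs x k u" and j: "j \<in> {1..k}"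
    and act: "\<forall>m. inner a (xs m - x) \<le> 0"
    and z: "\<forall>i\<in>{1..<j}. inner a (u i) = 0"
  shows "inner a (u j) \<le> 0"
proof -
  define r where "r = (\<lambda>m. xs m - x - proj_sub (span (u ` {1..<j})) (xs m - x))"
  from fr j have r0: "\<forall>m. r m \<noteq> 0" and lim: "(\<lambda>m. r m /\<^sub>R norm (r m)) \<longlonglongrightarrow> u j"
    unfolding frenet_frame_def r_def Let_def by auto
  have orth: "inner a p = 0" if "p \<in> span (u ` {1..<j})" for p
    using orthogonal_to_span[OF that, of a] z by (auto simp: orthogonal_def)
  have "inner a (r m) \<le> 0" for m
    using act orth[OF proj_in] unfolding r_def by (simp add: inner_diff_right)
  hence le: "inner a (r m /\<^sub>R norm (r m)) \<le> 0" for m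
    by (metis inverse_nonnegative_iff_nonnegative norm_ge_zero mult_nonneg_nonpos inner_scaleR_right)
  have "(\<lambda>m. inner a (r m /\<^sub>R norm (r m))) \<longlonglongrightarrow> inner a (u j)"
    by (intro tendsto_inner tendsto_const lim)
  thus ?thesis using le by (meson LIMSEQ_le_const2)
qed

lemma cone_lemma:
  fixes u :: "nat \<Rightarrow> 'a::real_inner"
  assumes fin: "finite A"
    and sgn: "\<forall>a\<in>A. \<forall>j\<in>{1..k}. (\<forall>i\<in>{1..<j}. inner a (u i) = 0) \<longrightarrow> inner a (u j) \<le> 0"
  shows "j \<le> k \<Longrightarrow> \<exists>\<mu>. (\<forall>i\<in>{1..j}. \<mu> i > 0) \<and>
     (\<forall>m\<le>j. \<forall>a\<in>A. (\<forall>i\<in>{1..m}. inner a (u i) = 0) \<or> inner a (\<Sum>i\<in>{1..m}. \<mu> i *\<^sub>R u i) < 0)"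
proof (induction j)
  case 0
  then show ?case by (intro exI[of _ "\<lambda>_. 1"]) auto
next
  case (Suc j)
  then obtain \<mu> where pos: "\<forall>i\<in>{1..j}. \<mu> i > 0" and
    inv: "\<forall>m\<le>j. \<forall>a\<in>A. (\<forall>i\<in>{1..m}. inner a (u i) = 0) \<or> inner a (\<Sum>i\<in>{1..m}. \<mu> i *\<^sub>R u i) < 0"
    by auto
  define S where "S = (\<Sum>i\<in>{1..j}. \<mu> i *\<^sub>R u i)"
  define P where "P = (\<lambda>a e. (\<forall>i\<in>{1..Suc j}. inner a (u i) = 0) \<or> inner a S + e * inner a (u (Suc j)) < 0)"
  have ev: "eventually (P a) (at_right 0)" if a: "a \<in> A" for a
  proof (cases "\<forall>i\<in>{1..j}. inner a (u i) = 0")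
    case True
    have S0: "inner a S = 0" unfolding S_def using True by (simp add: inner_sum_right)
    have "inner a (u (Suc j)) \<le> 0"
      using sgn a Suc.prems True by (auto simp: atLeastLessThanSuc_atLeastAtMost)
    then show ?thesis
    proof (cases "inner a (u (Suc j)) = 0")
      case True
      with \<open>\<forall>i\<in>{1..j}. inner a (u i) = 0\<close> have "\<forall>i\<in>{1..Suc j}. inner a (u i) = 0"
        by (auto simp: le_Suc_eq)
      then show ?thesis unfolding P_def by simp
    next
      case False
      with \<open>inner a (u (Suc j)) \<le> 0\<close> have neg: "inner a (u (Suc j)) < 0" by simp
      show ?thesis using eventually_at_right_less[of "0::real"]
        by eventually_elim (simp add: P_def S0 mult_pos_neg neg)
    qed
  next
    case False
    with inv a have neg: "inner a S < 0" unfolding S_def by auto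
    have "((\<lambda>e. inner a S + e * inner a (u (Suc j))) \<longlongrightarrow> inner a S + 0 * inner a (u (Suc j))) (at_right 0)"
      by (intro tendsto_intros)
    hence "eventually (\<lambda>e. inner a S + e * inner a (u (Suc j)) < 0) (at_right 0)"
      using neg by (intro order_tendstoD(2)) auto
    then show ?thesis by eventually_elim (simp add: P_def)
  qed
  have "eventually (\<lambda>e. e > 0 \<and> (\<forall>a\<in>A. P a e)) (at_right (0::real))"
    using eventually_conj[OF eventually_at_right_less eventually_ball_finite[OF fin ballI[OF ev]]] by simp
  then obtain e where e: "e > 0" "\<forall>a\<in>A. P a e"
    by (metis (no_types, lifting) eventually_happens' trivial_limit_at_right_real)
  define \<mu>' where "\<mu>' = \<mu>(Suc j := e)"
  have sumeq: "(\<Sum>i\<in>{1..m}. \<mu>' i *\<^sub>R u i) = (\<Sum>i\<in>{1..m}. \<mu> i *\<^sub>R u i)" if "m \<le> j" for m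
    using that by (intro sum.cong) (auto simp: \<mu>'_def)
  have sumS: "(\<Sum>i\<in>{1..Suc j}. \<mu>' i *\<^sub>R u i) = S + e *\<^sub>R u (Suc j)"
    using sumeq[of j] by (simp add: S_def \<mu>'_def)
  show ?case
  proof (intro exI[of _ \<mu>'] conjI ballI allI impI)
    fix i assume "i \<in> {1..Suc j}" thus "\<mu>' i > 0" using pos e by (auto simp: \<mu>'_def le_Suc_eq)
  next
    fix m a assume m: "m \<le> Suc j" and a: "a \<in> A"
    show "(\<forall>i\<in>{1..m}. inner a (u i) = 0) \<or> inner a (\<Sum>i\<in>{1..m}. \<mu>' i *\<^sub>R u i) < 0"
    proof (cases "m \<le> j")
      case True thus ?thesis using inv a sumeq by auto
    next
      case False
      hence "m = Suc j" using m by simp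
      thus ?thesis using e a sumS by (simp add: P_def inner_add_right)
    qed
  qed
qed

theorem theorem3p3:
  fixes xs :: "nat \<Rightarrow> 'a::euclidean_space" and x :: 'a and k :: nat
    and u :: "nat \<Rightarrow> 'a" and T :: "'a set"
  assumes "k \<ge> 1"
    and "frenet_frame xs x k u"
    and "\<exists>d. d simplex T"
    and "\<forall>i. xs i \<in> T"
  shows "\<exists>l :: nat \<Rightarrow> real. (\<forall>j\<in>{1..k}. l j > 0) \<and>
           convex hull ((\<lambda>j. x + (\<Sum>i\<in>{1..j}. l i *\<^sub>R u i)) ` {0..k}) \<subseteq> T"
proof -
  obtain d where "d simplex T" using assms(3) by blast
  then obtain C where "finite C" "T = convex hull C" by (auto simp: simplex)
  hence "polytope T" by (auto simp: polytope_def)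
  hence "polyhedron T" by (rule polytope_imp_polyhedron)
  then obtain F where F: "finite F" "T = \<Inter>F" "\<forall>h\<in>F. \<exists>a b. a \<noteq> 0 \<and> h = {y. a \<bullet> y \<le> b}"
    unfolding polyhedron_def by blast
  then obtain A B where AB: "\<forall>h\<in>F. h = {y. A h \<bullet> y \<le> B h}"
    by metis
  have conv: "convex T" unfolding \<open>T = convex hull C\<close> by simp
  have lim: "xs \<longlonglongrightarrow> x" using assms(2) unfolding frenet_frame_def by simp
  have xsle: "A h \<bullet> xs m \<le> B h" if "h \<in> F" for h m
    using assms(4) F(2) AB that by auto
  have xle: "A h \<bullet> x \<le> B h" if "h \<in> F" for h
  proof -
    have "(\<lambda>m. A h \<bullet> xs m) \<longlonglongrightarrow> A h \<bullet> x" by (intro tendsto_inner tendsto_const lim)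
    thus ?thesis using xsle[OF that] by (meson LIMSEQ_le_const2)
  qed
  define Act where "Act = A ` {h\<in>F. A h \<bullet> x = B h}"
  have finAct: "finite Act" unfolding Act_def using F(1) by simp
  have sgn: "\<forall>a\<in>Act. \<forall>j\<in>{1..k}. (\<forall>i\<in>{1..<j}. inner a (u i) = 0) \<longrightarrow> inner a (u j) \<le> 0"
  proof (intro ballI impI)
    fix a j assume a: "a \<in> Act" and j: "j \<in> {1..k}" and z: "\<forall>i\<in>{1..<j}. inner a (u i) = 0"
    from a obtain h where h: "h \<in> F" "A h \<bullet> x = B h" "a = A h" unfolding Act_def by auto
    have "\<forall>m. inner a (xs m - x) \<le> 0" using xsle[OF h(1)] h by (simp add: inner_diff_right)
    thus "inner a (u j) \<le> 0" using sign_lemma[OF assms(2) j _ z] by blast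
  qed
  obtain \<mu> where \<mu>pos: "\<forall>i\<in>{1..k}. \<mu> i > 0" and
    inv: "\<forall>m\<le>k. \<forall>a\<in>Act. (\<forall>i\<in>{1..m}. inner a (u i) = 0) \<or> inner a (\<Sum>i\<in>{1..m}. \<mu> i *\<^sub>R u i) < 0"
    using cone_lemma[OF finAct sgn, of k] by auto
  define V where "V = (\<lambda>m. \<Sum>i\<in>{1..m}. \<mu> i *\<^sub>R u i)"
  have Vle: "inner a (V m) \<le> 0" if "m \<le> k" "a \<in> Act" for a m
  proof -
    from inv that have "(\<forall>i\<in>{1..m}. inner a (u i) = 0) \<or> inner a (V m) < 0" unfolding V_def by blast
    thus ?thesis unfolding V_def by (auto simp: inner_sum_right)
  qed
  have ev: "eventually (\<lambda>t. \<forall>m\<in>{0..k}. A h \<bullet> (x + t *\<^sub>R V m) \<le> B h) (at_right 0)" if h: "h \<in> F" for h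
  proof (intro eventually_ball_finite ballI finite_atLeastAtMost)
    fix m assume m: "m \<in> {0..k}"
    show "eventually (\<lambda>t. A h \<bullet> (x + t *\<^sub>R V m) \<le> B h) (at_right 0)"
    proof (cases "A h \<bullet> x = B h")
      case True
      hence "A h \<in> Act" unfolding Act_def using h by auto
      hence AV: "A h \<bullet> V m \<le> 0" using Vle m by auto
      show ?thesis using eventually_at_right_less[of "0::real"]
        by eventually_elim (simp add: True AV inner_add_right mult_nonneg_nonpos)
    next
      case False
      hence lt: "A h \<bullet> x < B h" using xle[OF h] by simp
      have "((\<lambda>t. A h \<bullet> x + t * (A h \<bullet> V m)) \<longlongrightarrow> A h \<bullet> x + 0 * (A h \<bullet> V m)) (at_right 0)"
        by (intro tendsto_intros)
      hence "eventually (\<lambda>t. A h \<bullet> x + t * (A h \<bullet> V m) < B h) (at_right 0)"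
        using lt by (intro order_tendstoD(2)) auto
      then show ?thesis by eventually_elim (simp add: inner_add_right)
    qed
  qed
  have "eventually (\<lambda>t. t > 0 \<and> (\<forall>h\<in>F. \<forall>m\<in>{0..k}. A h \<bullet> (x + t *\<^sub>R V m) \<le> B h)) (at_right (0::real))"
    using eventually_conj[OF eventually_at_right_less eventually_ball_finite[OF F(1) ballI[OF ev]]] by simp
  then obtain t where t: "t > 0" "\<forall>h\<in>F. \<forall>m\<in>{0..k}. A h \<bullet> (x + t *\<^sub>R V m) \<le> B h"
    by (metis (no_types, lifting) eventually_happens' trivial_limit_at_right_real)
  define l where "l = (\<lambda>i. t * \<mu> i)"
  have pt: "x + (\<Sum>i\<in>{1..m}. l i *\<^sub>R u i) = x + t *\<^sub>R V m" for m
    unfolding l_def V_def by (simp add: scaleR_sum_right)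
  have inT: "(\<lambda>j. x + (\<Sum>i\<in>{1..j}. l i *\<^sub>R u i)) ` {0..k} \<subseteq> T"
  proof
    fix y assume "y \<in> (\<lambda>j. x + (\<Sum>i\<in>{1..j}. l i *\<^sub>R u i)) ` {0..k}"
    then obtain m where m: "m \<in> {0..k}" "y = x + t *\<^sub>R V m" using pt by auto
    show "y \<in> T" unfolding F(2)
    proof
      fix X assume X: "X \<in> F"
      then show "y \<in> X" using t(2) m AB by (metis (no_types, lifting) mem_Collect_eq)
    qed
  qed
  show ?thesis
  proof (intro exI[of _ l] conjI)
    show "\<forall>j\<in>{1..k}. l j > 0" using \<mu>pos t by (simp add: l_def)
    show "convex hull ((\<lambda>j. x + (\<Sum>i\<in>{1..j}. l i *\<^sub>R u i)) ` {0..k}) \<subseteq> T"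
      using inT conv by (simp add: hull_minimal)
  qed
qed

end
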